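(* For $h\in[H]$, let $\mathcal D_h$ be an offline dataset as described, with current-state and next-state marginal densities $d^D_h$ and $d^{D,\dagger}_h$. For any function $w_h:\mathcal X\to[-C^{\mathbf x}_h,C^{\mathbf x}_h]$ and any pseudo-policy $\bar\pi$ with $\bar\pi_h(a\mid x)/\pi^D_h(a\mid x)\le C^{\mathbf a}_h$ for all $x\in\mathcal X,a\in\mathcal A$, we have $\big\|\mathbf P^{\bar\pi}_h(d^D_hw_h)/d^{D,\dagger}_h\big\|_\infty\le C^{\mathbf x}_hC^{\mathbf a}_h$.
   Context: Finite-horizon MDP with measurable state space $\mathcal X$, finite action space $\mathcal A$, $[H]=\{0,\dots,H-1\}$, transitions $P_h$. Offline data: $\mathcal D_h$ consists of tuples $(x_h,a_h,x_{h+1})$ generated by an arbitrary (possibly history-dependent) roll-in to $x_h$, then $a_h\sim\pi^D_h(\cdot\mid x_h)$ for a Markov single-step policy $\pi^D_h$, then $x_{h+1}\sim P_h(\cdot\mid x_h,a_h)$; $d^D_h$, $d^{D,\dagger}_h$ are the marginal densities of $x_h$ and $x_{h+1}$. $(\mathbf P^{\bar\pi}_hd)(x'):=\iint P_h(x'\mid x,a)\bar\pi_h(a\mid x)d(x)\mathrm dx\,\mathrm da$. A pseudo-policy is $\bar\pi_h=\min\{\pi_h,C\pi^D_h\}$ for a Markov policy $\pi$ and constant $C>0$. Ratios use the convention $0/0=0$. *)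

theory Defs
  imports "HOL-Analysis.Analysis"
begin

definition ratio :: "real \<Rightarrow> real \<Rightarrow> ereal" where
  "ratio a b = (if b = 0 then (if a = 0 then 0 else if a > 0 then \<infinity> else -\<infinity>)
               else ereal (a / b))"

definition markov_policy_step :: "'x measure \<Rightarrow> ('x \<Rightarrow> 'a::finite \<Rightarrow> real) \<Rightarrow> bool" where
  "markov_policy_step M p \<longleftrightarrow>
     (\<forall>x\<in>space M. (\<forall>a. p x a \<ge> 0) \<and> (\<Sum>a\<in>UNIV. p x a) = 1) \<and>
     (\<forall>a. (\<lambda>x. p x a) \<in> borel_measurable M)"

text \<open>Transition kernels P h x a x' (density of x' w.r.t. the base measure M).\<close>
definition transition_kernel :: "'x measure \<Rightarrow> ('x \<Rightarrow> 'a::finite \<Rightarrow> 'x \<Rightarrow> real) \<Rightarrow> bool" where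
  "transition_kernel M Ph \<longleftrightarrow>
     (\<forall>x\<in>space M. \<forall>a. \<forall>x'\<in>space M. Ph x a x' \<ge> 0) \<and>
     (\<forall>x\<in>space M. \<forall>a. (\<integral>\<^sup>+ x'. ennreal (Ph x a x') \<partial>M) = 1) \<and>
     (\<forall>a. \<forall>x'\<in>space M. (\<lambda>x. Ph x a x') \<in> borel_measurable M)"

definition density_fun :: "'x measure \<Rightarrow> ('x \<Rightarrow> real) \<Rightarrow> bool" where
  "density_fun M d \<longleftrightarrow> d \<in> borel_measurable M \<and> (\<forall>x\<in>space M. d x \<ge> 0)
     \<and> (\<integral>\<^sup>+ x. ennreal (d x) \<partial>M) = 1"

definition pseudo_policy :: "(nat \<Rightarrow> 'x \<Rightarrow> 'a \<Rightarrow> real) \<Rightarrow> real \<Rightarrow> (nat \<Rightarrow> 'x \<Rightarrow> 'a \<Rightarrow> real)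
    \<Rightarrow> nat \<Rightarrow> 'x \<Rightarrow> 'a \<Rightarrow> real" where
  "pseudo_policy \<pi> C \<pi>D h x a = min (\<pi> h x a) (C * \<pi>D h x a)"

definition Pop :: "'x measure \<Rightarrow> (nat \<Rightarrow> 'x \<Rightarrow> 'a::finite \<Rightarrow> 'x \<Rightarrow> real)
    \<Rightarrow> (nat \<Rightarrow> 'x \<Rightarrow> 'a \<Rightarrow> real) \<Rightarrow> nat \<Rightarrow> ('x \<Rightarrow> real) \<Rightarrow> 'x \<Rightarrow> real" where
  "Pop M P pb h d x' = (\<integral> x. (\<Sum>a\<in>UNIV. P h x a x' * pb h x a) * d x \<partial>M)"

end

theory Submission
  imports Defs
begin

theorem lemma10:
  fixes M :: "'x measure"
    and P :: "nat \<Rightarrow> 'x \<Rightarrow> 'a::finite \<Rightarrow> 'x \<Rightarrow> real"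
    and \<pi>D \<pi> :: "nat \<Rightarrow> 'x \<Rightarrow> 'a \<Rightarrow> real"
    and dD dDdag :: "nat \<Rightarrow> 'x \<Rightarrow> real"
    and w :: "nat \<Rightarrow> 'x \<Rightarrow> real"
    and Cx Ca :: "nat \<Rightarrow> real"
    and C :: real and H h :: nat
  assumes "h < H"
    and kernel: "\<And>k. k < H \<Longrightarrow> transition_kernel M (P k)"
    and behav: "\<And>k. k < H \<Longrightarrow> markov_policy_step M (\<pi>D k)"
    and pol: "\<And>k. k < H \<Longrightarrow> markov_policy_step M (\<pi> k)"
    and dens: "\<And>k. k < H \<Longrightarrow> density_fun M (dD k)"
    and next_marg: "\<And>k x'. k < H \<Longrightarrow> x' \<in> space M \<Longrightarrow>
          ennreal (dDdag k x') = (\<integral>\<^sup>+ x. ennreal ((\<Sum>a\<in>UNIV. P k x a x' * \<pi>D k x a) * dD k x) \<partial>M)"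
    and "C > 0"
    and w_meas: "w h \<in> borel_measurable M"
    and w_range: "\<And>x. x \<in> space M \<Longrightarrow> w h x \<in> {- Cx h .. Cx h}"
    and ratio_bd: "\<And>x a. x \<in> space M \<Longrightarrow>
          ratio (pseudo_policy \<pi> C \<pi>D h x a) (\<pi>D h x a) \<le> ereal (Ca h)"
  shows "(SUP x'\<in>space M. \<bar>ratio (Pop M P (pseudo_policy \<pi> C \<pi>D) h (\<lambda>x. dD h x * w h x) x')
                                (dDdag h x')\<bar>) \<le> ereal (Cx h * Ca h)"
proof (rule SUP_least)
  fix x' assume x': "x' \<in> space M"
  let ?pb = "pseudo_policy \<pi> C \<pi>D h"
  define f where "f x = (\<Sum>a\<in>UNIV. P h x a x' * ?pb x a)" for x
  define g where "g x = (\<Sum>a\<in>UNIV. P h x a x' * \<pi>D h x a)" for x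
  define F where "F x = f x * (dD h x * w h x)" for x
  define G where "G x = Cx h * Ca h * (g x * dD h x)" for x
  have K: "transition_kernel M (P h)" using kernel \<open>h < H\<close> by blast
  have B: "markov_policy_step M (\<pi>D h)" using behav \<open>h < H\<close> by blast
  have Pl: "markov_policy_step M (\<pi> h)" using pol \<open>h < H\<close> by blast
  have Dn: "density_fun M (dD h)" using dens \<open>h < H\<close> by blast
  have Pm[measurable]: "\<And>a. (\<lambda>x. P h x a x') \<in> borel_measurable M"
    using K x' unfolding transition_kernel_def by blast
  have Bm[measurable]: "\<And>a. (\<lambda>x. \<pi>D h x a) \<in> borel_measurable M"
    using B unfolding markov_policy_step_def by blast
  have Plm[measurable]: "\<And>a. (\<lambda>x. \<pi> h x a) \<in> borel_measurable M"
    using Pl unfolding markov_policy_step_def by blast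
  have Dm[measurable]: "dD h \<in> borel_measurable M" using Dn unfolding density_fun_def by blast
  have wm[measurable]: "w h \<in> borel_measurable M" by (rule w_meas)
  have Pnn: "\<And>x a. x \<in> space M \<Longrightarrow> P h x a x' \<ge> 0"
    using K x' unfolding transition_kernel_def by blast
  have Bnn: "\<And>x a. x \<in> space M \<Longrightarrow> \<pi>D h x a \<ge> 0"
    using B unfolding markov_policy_step_def by blast
  have Plnn: "\<And>x a. x \<in> space M \<Longrightarrow> \<pi> h x a \<ge> 0"
    using Pl unfolding markov_policy_step_def by blast
  have Dnn: "\<And>x. x \<in> space M \<Longrightarrow> dD h x \<ge> 0" using Dn unfolding density_fun_def by blast
  have pbnn: "\<And>x a. x \<in> space M \<Longrightarrow> ?pb x a \<ge> 0"
    using Bnn Plnn \<open>C > 0\<close> by (simp add: pseudo_policy_def)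
  have pble: "\<And>x a. x \<in> space M \<Longrightarrow> ?pb x a \<le> Ca h * \<pi>D h x a"
  proof -
    fix x a assume x: "x \<in> space M"
    show "?pb x a \<le> Ca h * \<pi>D h x a"
    proof (cases "\<pi>D h x a = 0")
      case True
      then show ?thesis using Plnn[OF x, of a] by (simp add: pseudo_policy_def)
    next
      case False
      then have pos: "\<pi>D h x a > 0" using Bnn[OF x, of a] by simp
      have "ereal (?pb x a / \<pi>D h x a) \<le> ereal (Ca h)"
        using ratio_bd[OF x, of a] False by (simp add: ratio_def)
      then have "?pb x a / \<pi>D h x a \<le> Ca h" by simp
      then show ?thesis using pos by (simp add: divide_le_eq mult.commute)
    qed
  qed
  have Cx0: "Cx h \<ge> 0" using w_range[OF x'] by simp
  have Ca0: "Ca h \<ge> 0"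
  proof -
    have "(\<Sum>a\<in>UNIV. \<pi>D h x' a) = 1" using B x' unfolding markov_policy_step_def by blast
    then obtain a where "\<pi>D h x' a \<noteq> 0" by (metis (mono_tags, lifting) sum.neutral zero_neq_one)
    then have pos: "\<pi>D h x' a > 0" using Bnn[OF x', of a] by simp
    have "ereal (?pb x' a / \<pi>D h x' a) \<le> ereal (Ca h)"
      using ratio_bd[OF x', of a] pos by (simp add: ratio_def)
    then have "?pb x' a / \<pi>D h x' a \<le> Ca h" by simp
    moreover have "?pb x' a / \<pi>D h x' a \<ge> 0" using pbnn[OF x', of a] pos by simp
    ultimately show ?thesis by linarith
  qed
  have fnn: "\<And>x. x \<in> space M \<Longrightarrow> f x \<ge> 0"
    unfolding f_def using Pnn pbnn by (simp add: sum_nonneg)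
  have gnn: "\<And>x. x \<in> space M \<Longrightarrow> g x \<ge> 0"
    unfolding g_def using Pnn Bnn by (simp add: sum_nonneg)
  have fle: "\<And>x. x \<in> space M \<Longrightarrow> f x \<le> Ca h * g x"
  proof -
    fix x assume x: "x \<in> space M"
    have "f x \<le> (\<Sum>a\<in>UNIV. P h x a x' * (Ca h * \<pi>D h x a))"
      unfolding f_def by (rule sum_mono) (simp add: mult_left_mono pble[OF x] Pnn[OF x])
    also have "\<dots> = Ca h * g x" unfolding g_def by (simp add: sum_distrib_left algebra_simps)
    finally show "f x \<le> Ca h * g x" .
  qed
  have fm[measurable]: "f \<in> borel_measurable M" unfolding f_def pseudo_policy_def by measurable
  have gm[measurable]: "g \<in> borel_measurable M" unfolding g_def by measurable
  define D where "D = max 0 (dDdag h x')"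
  have nn: "(\<integral>\<^sup>+ x. ennreal (g x * dD h x) \<partial>M) = ennreal D"
  proof -
    have "ennreal D = ennreal (dDdag h x')" unfolding D_def
      by (cases "dDdag h x' \<ge> 0") (auto simp: max_def ennreal_neg)
    then show ?thesis using next_marg[OF \<open>h < H\<close> x'] unfolding g_def by simp
  qed
  have gint: "integrable M (\<lambda>x. g x * dD h x)" and gval: "(\<integral>x. g x * dD h x \<partial>M) = D"
    using nn_integral_eq_integrable[of "\<lambda>x. g x * dD h x" M D] nn gnn Dnn
    by (auto simp: D_def)
  have Gint: "integrable M G" unfolding G_def using gint by simp
  have Gval: "(\<integral>x. G x \<partial>M) = Cx h * Ca h * D" unfolding G_def using gval by simp
  have Fb: "\<And>x. x \<in> space M \<Longrightarrow> norm (F x) \<le> G x"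
  proof -
    fix x assume x: "x \<in> space M"
    have wa: "\<bar>w h x\<bar> \<le> Cx h" using w_range[OF x] by auto
    have "norm (F x) = f x * dD h x * \<bar>w h x\<bar>"
      unfolding F_def using fnn[OF x] Dnn[OF x] by (simp add: abs_mult)
    also have "\<dots> \<le> (Ca h * g x) * dD h x * Cx h"
      using fle[OF x] Dnn[OF x] wa fnn[OF x]
      by (meson mult_mono mult_nonneg_nonneg mult_right_mono order_trans abs_ge_zero)
    also have "\<dots> = G x" unfolding G_def by simp
    finally show "norm (F x) \<le> G x" .
  qed
  have Fm[measurable]: "F \<in> borel_measurable M" unfolding F_def by measurable
  have Fint: "integrable M F"
    by (rule Bochner_Integration.integrable_bound[OF Gint Fm]) (use Fb in \<open>auto intro!: AE_I2 order_trans[OF _ abs_ge_self]\<close>)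
  have Pop_eq: "Pop M P (pseudo_policy \<pi> C \<pi>D) h (\<lambda>x. dD h x * w h x) x' = (\<integral>x. F x \<partial>M)"
    unfolding Pop_def F_def f_def by simp
  have bound: "\<bar>\<integral>x. F x \<partial>M\<bar> \<le> Cx h * Ca h * D"
  proof -
    have "norm (\<integral>x. F x \<partial>M) \<le> (\<integral>x. norm (F x) \<partial>M)" by (rule integral_norm_bound)
    also have "\<dots> \<le> (\<integral>x. G x \<partial>M)" using Fint Gint Fb by (intro integral_mono) auto
    finally show ?thesis using Gval by simp
  qed
  have CC: "Cx h * Ca h \<ge> 0" using Cx0 Ca0 by simp
  show "\<bar>ratio (Pop M P (pseudo_policy \<pi> C \<pi>D) h (\<lambda>x. dD h x * w h x) x') (dDdag h x')\<bar> \<le> ereal (Cx h * Ca h)"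
  proof (cases "dDdag h x' > 0")
    case True
    then have "D = dDdag h x'" by (simp add: D_def)
    then have "\<bar>(\<integral>x. F x \<partial>M) / dDdag h x'\<bar> \<le> Cx h * Ca h"
      using bound True by (simp add: abs_divide divide_le_eq)
    then show ?thesis using True Pop_eq by (simp add: ratio_def)
  next
    case False
    then have "D = 0" by (simp add: D_def)
    then have "(\<integral>x. F x \<partial>M) = 0" using bound by simp
    then show ?thesis using Pop_eq CC by (simp add: ratio_def)
  qed
qed

end
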